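(* Let $\alpha,n\in\mathbb{Q}$ with $n\neq0$. The elliptic curve $$E_{\alpha,-n^2}:\ y^2=x^3+\alpha x^2-n^2x$$ has no rational point of order $5$. *)

theory Defs
  imports Main "HOL.Rat"
begin

datatype ecpt = Inf | Pt rat rat

definition on_curve :: "rat \<Rightarrow> rat \<Rightarrow> ecpt \<Rightarrow> bool" where
  "on_curve a b P = (case P of Inf \<Rightarrow> True
      | Pt x y \<Rightarrow> y^2 = x^3 + a * x^2 + b * x)"

definition ec_add :: "rat \<Rightarrow> rat \<Rightarrow> ecpt \<Rightarrow> ecpt \<Rightarrow> ecpt" where
  "ec_add a b P Q = (case P of Inf \<Rightarrow> Q | Pt x1 y1 \<Rightarrow>
     (case Q of Inf \<Rightarrow> P | Pt x2 y2 \<Rightarrow>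
       (if x1 = x2 \<and> y1 = - y2 then Inf
        else let l = (if x1 = x2 then (3 * x1^2 + 2 * a * x1 + b) / (2 * y1)
                      else (y2 - y1) / (x2 - x1));
                 x3 = l^2 - a - x1 - x2;
                 y3 = - (y1 + l * (x3 - x1))
             in Pt x3 y3)))"

fun ec_smul :: "rat \<Rightarrow> rat \<Rightarrow> nat \<Rightarrow> ecpt \<Rightarrow> ecpt" where
  "ec_smul a b 0 P = Inf"
| "ec_smul a b (Suc k) P = ec_add a b P (ec_smul a b k P)"

definition has_order :: "rat \<Rightarrow> rat \<Rightarrow> ecpt \<Rightarrow> nat \<Rightarrow> bool" where
  "has_order a b P k = (0 < k \<and> ec_smul a b k P = Inf \<and>
      (\<forall>j. 0 < j \<and> j < k \<longrightarrow> ec_smul a b j P \<noteq> Inf))"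

end

theory Submission
  imports Defs "HOL-Computational_Algebra.Nth_Powers"
begin


lemma odd_sq8: "odd (x::nat) \<Longrightarrow> \<exists>k. x^2 = 8*k+1"
proof -
  assume "odd x" then obtain j where j: "x = 2*j+1" by (metis oddE)
  have "even (j*(j+1))" by simp
  then obtain i where i: "j*(j+1) = 2*i" by (metis evenE)
  have "x^2 = 4*(j*(j+1)) + 1" by (simp add: j power2_eq_square algebra_simps)
  thus ?thesis using i by (intro exI[of _ i]) simp
qed

lemma sq_mod5: "(x::nat)^2 mod 5 = 0 \<or> x^2 mod 5 = 1 \<or> x^2 mod 5 = 4"
proof -
  have e: "x^2 mod 5 = (x mod 5)^2 mod 5" by (simp add: power_mod)
  have "x mod 5 < 5" by simp
  hence "x mod 5 = 0 \<or> x mod 5 = 1 \<or> x mod 5 = 2 \<or> x mod 5 = 3 \<or> x mod 5 = 4" by linarith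
  thus ?thesis unfolding e by auto
qed

lemma sq_mod5_0: "(x::nat)^2 mod 5 = 0 \<Longrightarrow> 5 dvd x"
proof -
  assume "x^2 mod 5 = 0"
  hence "(5::nat) dvd x^2" by auto
  moreover have "prime (5::nat)" by simp
  ultimately show ?thesis using prime_dvd_power by blast
qed

lemma mod5_arg:
  fixes U V M :: nat
  assumes "U^2 = M + 2*V^2" "5 dvd M"
  shows "5 dvd U \<and> 5 dvd V"
proof -
  have "U^2 mod 5 = (2*(V^2 mod 5)) mod 5" using assms by (simp add: mod_add_eq[symmetric] mod_mult_right_eq)
  then have "U^2 mod 5 = 0 \<and> V^2 mod 5 = 0" using sq_mod5[of U] sq_mod5[of V] by auto
  thus ?thesis using sq_mod5_0[of U] sq_mod5_0[of V] by simp
qed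

lemma sq_mod16: "(w::nat)^2 \<noteq> 16*K + 8"
proof
  assume h: "w^2 = 16*K+8"
  hence "even (w^2)" by simp
  hence "even w" by simp
  then obtain k where k: "w = 2*k" by blast
  hence "4*k^2 = 16*K+8" using h by (simp add: power_mult_distrib)
  hence "k^2 = 4*K+2" by simp
  hence "even (k^2)" by simp
  hence "even k" by simp
  then obtain j where "k = 2*j" by blast
  hence "4*j^2 = 4*K+2" using \<open>k^2 = 4*K+2\<close> by (simp add: power_mult_distrib)
  thus False by presburger
qed

lemma cop_add_mult: "coprime (k*y + x) (y::nat) \<longleftrightarrow> coprime x y"
  by (metis coprime_iff_gcd_eq_1 gcd.commute gcd_add_mult)

lemma E1_none:
  fixes a c w :: nat
  assumes "a > 0" "w^2 = 5*a^4 + 2*a^2*c^2 + c^4"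
  shows False
  using assms
proof (induction a arbitrary: c w rule: less_induct)
  case (less a c w)
  note IH = less.IH and apos = less.prems(1) and eq = less.prems(2)
  show False
  proof (cases "gcd a c = 1")
    case False
    define d where "d = gcd a c"
    have d1: "d > 1" using False apos unfolding d_def
      by (metis gcd_pos_nat less_one nat_neq_iff)
    obtain a' where a': "a = d*a'" unfolding d_def by (metis gcd_dvd1 dvdE)
    obtain c' where c': "c = d*c'" unfolding d_def by (metis gcd_dvd2 dvdE)
    have weq: "w^2 = d^4 * (5*a'^4 + 2*a'^2*c'^2 + c'^4)"
      using eq a' c' by (simp add: power_mult_distrib algebra_simps)
    hence "(d^2)^2 dvd w^2" by (simp add: power_mult[symmetric])
    hence "d^2 dvd w" using pow_divides_pow_iff[where n=2 and a="d^2" and b=w] by (metis zero_less_numeral)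
    then obtain w' where w': "w = d^2*w'" by blast
    have "d^4 * w'^2 = d^4 * (5*a'^4 + 2*a'^2*c'^2 + c'^4)"
      using weq w' by (simp add: power_mult_distrib power_mult[symmetric])
    hence w'eq: "w'^2 = 5*a'^4 + 2*a'^2*c'^2 + c'^4" using d1 by simp
    have "a' > 0" using apos a' by simp
    moreover have "a' < a" using a' d1 apos by simp
    ultimately show False using IH w'eq by blast
  next
    case True
    hence cop: "coprime a c" by (simp add: coprime_iff_gcd_eq_1)
    define s where "s = a^2 + c^2"
    have not_both_even: "\<not> (even a \<and> even c)"
      using cop by (metis coprime_common_divisor_nat even_numeral odd_one dvd_refl)
    have not_both_odd: "\<not> (odd a \<and> odd c)"
    proof
      assume "odd a \<and> odd c"
      then obtain i j where i: "a^2 = 8*i+1" and j: "c^2 = 8*j+1" using odd_sq8 by blast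
      have "a^4 = (a^2)^2" "c^4 = (c^2)^2" by (simp_all add: power_mult[symmetric])
      hence "w^2 = 5*(8*i+1)^2 + 2*(8*i+1)*(8*j+1) + (8*j+1)^2"
        using eq i j by (simp add: power_mult_distrib algebra_simps)
      also have "\<dots> = 16*(20*i^2+5*i+8*i*j+i+j+4*j^2+j) + 8"
        by (simp add: power2_eq_square algebra_simps)
      finally show False using sq_mod16 by blast
    qed
    have sodd: "odd s" unfolding s_def using not_both_even not_both_odd by auto
    have a4: "a^4 = (a^2)^2" "c^4 = (c^2)^2" by (simp_all add: power_mult[symmetric])
    have weq2: "w^2 = s^2 + 4*a^4" unfolding s_def using eq a4 by (simp add: power2_eq_square algebra_simps)
    have "w^2 > s^2" using weq2 apos by simp
    hence ws: "w > s" using power_less_imp_less_base by blast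
    have "odd (w^2)" using weq2 sodd by simp
    hence wodd: "odd w" by simp
    have "even (w - s)" using wodd sodd ws by simp
    then obtain P where P: "w - s = 2*P" by blast
    hence wP: "w = s + 2*P" using ws by simp
    have PQ: "P*(s+P) = a^4" using weq2 wP by (simp add: power2_eq_square algebra_simps)
    have Ppos: "P > 0" using PQ apos by (metis gr0I mult_is_0 zero_less_power)
    have Qpos: "s + P > 0" using Ppos by simp
    have cops: "coprime s (a^4)"
    proof -
      have "coprime (c^2) a" using cop by (simp add: coprime_commute)
      hence "coprime (a*a + c^2) a" using cop_add_mult by blast
      hence "coprime s a" unfolding s_def by (simp add: power2_eq_square)
      thus ?thesis by simp
    qed
    have copPQ: "coprime P (s+P)"
    proof (rule coprimeI)
      fix g assume g1: "g dvd P" and g2: "g dvd s+P"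
      hence "g dvd s" by (simp add: dvd_add_left_iff)
      moreover have "g dvd a^4" using g1 PQ by (metis dvd_mult2)
      ultimately show "is_unit g" using cops coprime_common_divisor by blast
    qed
    have "is_nth_power 4 (P*(s+P))" using PQ by auto
    then obtain V U where V: "P = V^4" and U: "s + P = U^4"
      using is_nth_power_mult_coprime_natD[OF copPQ _ Ppos Qpos] by (meson is_nth_powerE)
    have "a^4 = (U*V)^4" using PQ U V by (metis mult.commute power_mult_distrib)
    hence aUV: "a = U*V" using power_eq_iff_eq_base[of 4 a "U*V"] by simp
    have Vpos: "V > 0" using V Ppos by simp
    have Upos: "U > 0" using U Qpos by simp
    have copUV: "coprime U V" using copPQ U V by (simp add: coprime_commute)
    have E2: "c^2 + U^2*V^2 + V^4 = U^4"
      using U V aUV unfolding s_def by (simp add: power_mult_distrib)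
    have aeven: "even a"
    proof (rule ccontr)
      assume "odd a" hence "odd U" "odd V" using aUV by auto
      hence "odd (s + V^4)" "odd (V^4)" using U V by simp_all
      hence "even s" by simp
      thus False using sodd by simp
    qed
    hence codd: "odd c" using not_both_even by blast
    have Uodd: "odd U"
    proof
      assume Ue: "even U"
      hence Vo: "odd V" using copUV by (metis coprime_common_divisor_nat even_numeral odd_one dvd_refl)
      obtain u where u: "U = 2*u" using Ue by blast
      obtain i where i: "c^2 = 8*i+1" using odd_sq8 codd by blast
      obtain j where j: "V^2 = 8*j+1" using odd_sq8 Vo by blast
      have "V^4 = (V^2)^2" by (simp add: power_mult[symmetric])
      hence "(8*i+1) + 4*u^2*V^2 + (8*j+1)^2 = 16*u^4" using E2 u i j by (simp add: power_mult_distrib)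
      hence "(8*i+1) + 4*u^2*V^2 + (64*j^2+16*j+1) = 16*u^4" by (simp add: power2_eq_square algebra_simps)
      hence "4*(2*i + u^2*V^2 + 16*j^2 + 4*j) + 2 = 4*(4*u^4)" by (simp add: algebra_simps)
      moreover have "\<And>K L::nat. 4*K + 2 \<noteq> 4*L" by presburger
      ultimately show False by blast
    qed
    have "even V" using aeven aUV Uodd by simp
    then obtain V1 where V1: "V = 2*V1" by blast
    have V1pos: "V1 > 0" using Vpos V1 by simp
    have E2': "c^2 + 4*U^2*V1^2 + 16*V1^4 = U^4" using E2 V1 by (simp add: power_mult_distrib)
    have "U^2*U^2 > U^2*(4*V1^2)"
    proof -
      have "16*V1^4 > 0" using V1pos by simp
      hence "U^4 > 4*U^2*V1^2" using E2' by linarith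
      thus ?thesis by (simp add: power2_eq_square power4_eq_xxxx algebra_simps)
    qed
    hence "U^2 > 4*V1^2" by (metis mult_le_mono2 not_less)
    hence "2*V1^2 \<le> U^2" by linarith
    then obtain M where M: "U^2 = M + 2*V1^2" by (metis le_add_diff_inverse2)
    have U4: "U^4 = (U^2)^2" by (simp add: power_mult[symmetric])
    have Meq: "M^2 = c^2 + 20*V1^4"
      using E2' M U4 by (simp add: power2_eq_square power4_eq_xxxx algebra_simps)
    hence "M^2 > c^2" using V1pos by simp
    hence Mc: "M > c" using power_less_imp_less_base by blast
    have "odd (U^2)" using Uodd by simp
    hence Modd: "odd M" using M by (metis even_add even_mult_iff even_numeral)
    have "even (M - c)" using Modd codd Mc by simp
    then obtain A where A: "M - c = 2*A" by blast
    hence MA: "M = c + 2*A" using Mc by simp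
    have AB: "A*(c+A) = 5*V1^4" using Meq MA by (simp add: power2_eq_square algebra_simps)
    have Apos: "A > 0" using AB V1pos by (metis gr0I mult_is_0 zero_less_power zero_less_numeral mult_pos_pos)
    have Bpos: "c + A > 0" using Apos by simp
    have copUV1: "coprime U V1" using copUV V1 by simp
    have copMV1: "coprime M V1"
    proof -
      have "coprime (U^2) V1" using copUV1 by simp
      moreover have "U^2 = (2*V1)*V1 + M" using M by (simp add: power2_eq_square)
      ultimately have "coprime ((2*V1)*V1 + M) V1" by simp
      thus ?thesis using cop_add_mult by blast
    qed
    have copM5: "coprime M 5"
    proof -
      have "\<not> 5 dvd M"
      proof
        assume "5 dvd M"
        hence "5 dvd U \<and> 5 dvd V1" using mod5_arg M by blast
        thus False using copUV1 by (metis coprime_common_divisor_nat dvd_refl numeral_eq_one_iff semiring_norm(86))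
      qed
      moreover have "prime (5::nat)" by simp
      ultimately show ?thesis by (metis coprime_commute prime_imp_coprime)
    qed
    have copM: "coprime M (5*V1^4)" using copM5 copMV1 by simp
    have copAB: "coprime A (c+A)"
    proof (rule coprimeI)
      fix g assume g1: "g dvd A" and g2: "g dvd c+A"
      hence "g dvd M" using MA by (metis dvd_add mult_2 add.assoc)
      moreover have "g dvd 5*V1^4" using g1 AB by (metis dvd_mult2)
      ultimately show "is_unit g" using copM coprime_common_divisor by blast
    qed
    have "prime (5::nat)" by simp
    moreover have "5 dvd A*(c+A)" using AB by simp
    ultimately have "5 dvd A \<or> 5 dvd (c+A)" using prime_dvd_mult_iff by blast
    thus False
    proof
      assume "5 dvd A"
      then obtain A' where A': "A = 5*A'" by blast
      have A'B: "A'*(c+A) = V1^4" using AB A' by simp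
      have cop': "coprime A' (c+A)" using copAB A' by simp
      have "A' > 0" using A' Apos by simp
      moreover have "is_nth_power 4 (A'*(c+A))" using A'B by auto
      ultimately obtain g h where g: "A' = g^4" and h: "c+A = h^4"
        using is_nth_power_mult_coprime_natD[OF cop' _ _ Bpos] by (meson is_nth_powerE)
      have "V1^4 = (g*h)^4" using A'B g h by (simp add: power_mult_distrib)
      hence V1gh: "V1 = g*h" using power_eq_iff_eq_base[of 4 V1 "g*h"] by simp
      have gpos: "g > 0" using g \<open>A' > 0\<close> by simp
      have hpos: "h > 0" using h Bpos by simp
      have "U^2 = 5*g^4 + 2*g^2*h^2 + h^4"
        using M MA A' g h V1gh by (simp add: power_mult_distrib algebra_simps)
      moreover have "g < a"
      proof -
        have "g \<le> V1" using V1gh hpos by simp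
        also have "V1 < V" using V1 V1pos by simp
        also have "V \<le> a" using aUV Upos by simp
        finally show ?thesis .
      qed
      ultimately show False using IH gpos by blast
    next
      assume "5 dvd (c+A)"
      then obtain B' where B': "c+A = 5*B'" by blast
      have AB': "A*B' = V1^4" using AB B' by simp
      have cop': "coprime A B'" using copAB B' by simp
      have "B' > 0" using B' Bpos by simp
      moreover have "is_nth_power 4 (A*B')" using AB' by auto
      ultimately obtain g h where g: "A = g^4" and h: "B' = h^4"
        using is_nth_power_mult_coprime_natD[OF cop' _ Apos] by (meson is_nth_powerE)
      have "V1^4 = (g*h)^4" using AB' g h by (simp add: power_mult_distrib)
      hence V1gh: "V1 = g*h" using power_eq_iff_eq_base[of 4 V1 "g*h"] by simp
      have gpos: "g > 0" using g Apos by simp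
      have hpos: "h > 0" using h \<open>B' > 0\<close> by simp
      have "M = c + A + A" using MA by simp
      hence "U^2 = 5*h^4 + 2*h^2*g^2 + g^4"
        using M B' g h V1gh by (simp add: power_mult_distrib algebra_simps)
      moreover have "h < a"
      proof -
        have "h \<le> V1" using V1gh gpos by simp
        also have "V1 < V" using V1 V1pos by simp
        also have "V \<le> a" using aUV Upos by simp
        finally show ?thesis .
      qed
      ultimately show False using IH hpos by blast
    qed
  qed
qed



lemma chord_on:
  fixes a b x1 y1 x2 y2 m x3 y3 :: rat
  assumes c1: "y1^2 = x1^3 + a*x1^2 + b*x1" and c2: "y2^2 = x2^3 + a*x2^2 + b*x2"
    and ne: "x1 \<noteq> x2" and m: "m = (y2 - y1)/(x2 - x1)"
    and x3: "x3 = m^2 - a - x1 - x2" and y3: "y3 = - (y1 + m*(x3 - x1))"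
  shows "y3^2 = x3^3 + a*x3^2 + b*x3"
proof -
  have my: "y1 + m*(x2 - x1) = y2" using m ne by (simp add: field_simps)
  have sq: "(y1 + m*(x3-x1))^2 = y3^2" unfolding y3 by algebra
  have id: "(x3^3 + a*x3^2 + b*x3 - (y1 + m*(x3-x1))^2)*(x2-x1)
     = (x2^3 + a*x2^2 + b*x2 - (y1 + m*(x2-x1))^2)*(x3-x1)
     + (x1^3 + a*x1^2 + b*x1 - y1^2)*(x2-x3)"
    unfolding x3 by algebra
  have "(x3^3 + a*x3^2 + b*x3 - y3^2)*(x2-x1) = 0"
    using id c1 c2 my sq by simp
  thus ?thesis using ne by simp
qed

lemma tangent_on:
  fixes a b x1 y1 m x3 y3 :: rat
  assumes c1: "y1^2 = x1^3 + a*x1^2 + b*x1"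
    and m: "2*m*y1 = 3*x1^2 + 2*a*x1 + b"
    and x3: "x3 = m^2 - a - x1 - x1" and y3: "y3 = - (y1 + m*(x3 - x1))"
  shows "y3^2 = x3^3 + a*x3^2 + b*x3"
proof -
  have id: "x3^3 + a*x3^2 + b*x3 - (y1 + m*(x3-x1))^2
     = (x1^3 + a*x1^2 + b*x1 - y1^2) + (x3-x1)*(3*x1^2 + 2*a*x1 + b - 2*m*y1)"
    unfolding x3 by algebra
  have sq: "(y1 + m*(x3-x1))^2 = y3^2" unfolding y3 by algebra
  show ?thesis using id c1 m sq by simp
qed

lemma DR:
  fixes a b x1 y1 x2 y2 m :: rat
  assumes c1: "y1^2 = x1^3 + a*x1^2 + b*x1" and c2: "y2^2 = x2^3 + a*x2^2 + b*x2"
    and ne: "x1 \<noteq> x2" and m: "m*(x2 - x1) = y2 - y1"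
    and m2: "m^2 = a + x1 + 2*x2"
  shows "2*m*y2 = 3*x2^2 + 2*a*x2 + b"
proof -
  have y1: "y1 = y2 + m*(x1 - x2)" using m by (simp add: algebra_simps)
  have id: "(x1 - x2)*(2*m*y2 - (3*x2^2 + 2*a*x2 + b)) =
     ((y2 + m*(x1 - x2))^2 - y2^2) - ((x1^3 + a*x1^2 + b*x1) - (x2^3 + a*x2^2 + b*x2))
     + (x1-x2)^2*(a + x1 + 2*x2 - m^2)"
    by algebra
  have "(x1 - x2)*(2*m*y2 - (3*x2^2 + 2*a*x2 + b)) = 0"
    using id c1 c2 y1 m2 by simp
  thus ?thesis using ne by simp
qed

lemma doubling:
  fixes a b x y l z :: rat
  assumes c: "y^2 = x^3 + a*x^2 + b*x" and l: "2*l*y = 3*x^2 + 2*a*x + b"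
    and z: "z = l^2 - a - x - x"
  shows "4*y^2*z = (x^2 - b)^2"
proof -
  have "4*y^2*z = (2*l*y)^2 - 4*y^2*(a + 2*x)" unfolding z by algebra
  also have "\<dots> = (3*x^2 + 2*a*x + b)^2 - 4*(x^3 + a*x^2 + b*x)*(a+2*x)" using c l by simp
  also have "\<dots> = (x^2 - b)^2" by algebra
  finally show ?thesis .
qed

lemma no_double:
  fixes a n z :: rat
  assumes "z^3 + a*z^2 - n^2*z = 0" "3*z^2 + 2*a*z - n^2 = 0" "n \<noteq> 0"
  shows False
proof (cases "z = 0")
  case True thus False using assms by simp
next
  case False
  have "z*(z^2 + a*z - n^2) = 0" using assms(1) by algebra
  hence "z^2 + a*z - n^2 = 0" using False by simp
  hence "z^2 + n^2 = 0" using assms(2) by algebra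
  thus False using assms(3) by (simp add: add_nonneg_eq_0_iff)
qed

lemma relation:
  fixes a n x z y y2 :: rat
  assumes "4*y^2*z = (x^2 + n^2)^2" "y^2 = x^3 + a*x^2 - n^2*x"
    "4*y2^2*x = (z^2 + n^2)^2" "y2^2 = z^3 + a*z^2 - n^2*z" "x \<noteq> z"
  shows "x*z*(x+z)^2 = 5*(x*z)^2 + 2*n^2*(x*z) + n^4"
proof -
  have "(x - z)*(x*z*(x+z)^2 - (5*(x*z)^2 + 2*n^2*(x*z) + n^4)) = 0"
    using assms(1-4) by algebra
  thus ?thesis using assms(5) by simp
qed



lemma E1_int:
  fixes a c w :: int
  assumes "a \<noteq> 0" "w^2 = 5*a^4 + 2*a^2*c^2 + c^4"
  shows False
proof -
  define A where "A = nat \<bar>a\<bar>"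
  define C where "C = nat \<bar>c\<bar>"
  define W where "W = nat \<bar>w\<bar>"
  have ia: "int A = \<bar>a\<bar>" "int C = \<bar>c\<bar>" "int W = \<bar>w\<bar>" unfolding A_def C_def W_def by simp_all
  have e4: "\<And>x::int. \<bar>x\<bar>^4 = x^4" "\<And>x::int. \<bar>x\<bar>^2 = x^2"
    by (simp_all add: power_abs[symmetric])
  have "int (W^2) = int (5*A^4 + 2*A^2*C^2 + C^4)"
    using assms(2) by (simp add: ia e4)
  hence "W^2 = 5*A^4 + 2*A^2*C^2 + C^4" by (simp only: of_nat_eq_iff)
  moreover have "A > 0" using assms(1) unfolding A_def by simp
  ultimately show False using E1_none by blast
qed

lemma E1_rat:
  fixes p c w :: rat
  assumes "p \<noteq> 0" "w^2 = 5*p^4 + 2*p^2*c^2 + c^4"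
  shows False
proof -
  obtain pn pd where qp: "quotient_of p = (pn, pd)" by (cases "quotient_of p")
  obtain cn cd where qc: "quotient_of c = (cn, cd)" by (cases "quotient_of c")
  obtain wn wd where qw: "quotient_of w = (wn, wd)" by (cases "quotient_of w")
  have pe: "p = of_int pn / of_int pd" and pd: "pd > 0" using qp quotient_of_div quotient_of_denom_pos by blast+
  have ce: "c = of_int cn / of_int cd" and cd: "cd > 0" using qc quotient_of_div quotient_of_denom_pos by blast+
  have we: "w = of_int wn / of_int wd" and wd: "wd > 0" using qw quotient_of_div quotient_of_denom_pos by blast+
  define D where "D = pd*cd*wd"
  define P where "P = pn*cd*wd"
  define Cc where "Cc = cn*pd*wd"
  define W where "W = wn*(pd*cd)^2*wd"
  have hP: "(of_int P :: rat) = of_int D * p" unfolding P_def D_def pe using pd by (simp add: field_simps)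
  have hC: "(of_int Cc :: rat) = of_int D * c" unfolding Cc_def D_def ce using cd by (simp add: field_simps)
  have hW: "(of_int W :: rat) = (of_int D)^2 * w" unfolding W_def D_def we using wd by (simp add: field_simps power2_eq_square)
  have "(of_int (W^2) :: rat) = of_int (5*P^4 + 2*P^2*Cc^2 + Cc^4)"
  proof -
    have "(of_int (W^2) :: rat) = (of_int D)^4 * w^2" using hW by (simp add: power_mult_distrib power_mult[symmetric])
    also have "\<dots> = 5*(of_int D * p)^4 + 2*(of_int D*p)^2*(of_int D*c)^2 + (of_int D*c)^4"
      using assms(2) by (simp add: power_mult_distrib algebra_simps)
    also have "\<dots> = of_int (5*P^4 + 2*P^2*Cc^2 + Cc^4)" using hP hC by simp
    finally show ?thesis .
  qed
  hence "W^2 = 5*P^4 + 2*P^2*Cc^2 + Cc^4" by (simp only: of_int_eq_iff)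
  moreover have "P \<noteq> 0"
  proof
    assume "P = 0" hence "of_int D * p = 0" using hP by simp
    thus False using assms(1) pd cd wd unfolding D_def by simp
  qed
  ultimately show False using E1_int by blast
qed



lemma add_inf: "ec_add a b P Inf = P" by (cases P) (simp_all add: ec_add_def)

lemma add_neg: "x1 = x2 \<Longrightarrow> y1 = - y2 \<Longrightarrow> ec_add a b (Pt x1 y1) (Pt x2 y2) = Inf"
  by (simp add: ec_add_def)

lemma add_chord: "x1 \<noteq> x2 \<Longrightarrow> m = (y2 - y1)/(x2 - x1) \<Longrightarrow>
  ec_add a b (Pt x1 y1) (Pt x2 y2) = Pt (m^2 - a - x1 - x2) (- (y1 + m*((m^2 - a - x1 - x2) - x1)))"
  by (simp add: ec_add_def Let_def)

lemma add_tan: "x1 = x2 \<Longrightarrow> y1 \<noteq> - y2 \<Longrightarrow> l = (3*x1^2 + 2*a*x1 + b)/(2*y1) \<Longrightarrow>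
  ec_add a b (Pt x1 y1) (Pt x2 y2) = Pt (l^2 - a - x1 - x2) (- (y1 + l*((l^2 - a - x1 - x2) - x1)))"
  by (simp add: ec_add_def Let_def)

theorem proposition7p7:
  fixes \<alpha> n :: rat
  assumes "n \<noteq> 0"
  shows "\<not> (\<exists>P. on_curve \<alpha> (- (n^2)) P \<and> has_order \<alpha> (- (n^2)) P 5)"
proof
  assume "\<exists>P. on_curve \<alpha> (- (n^2)) P \<and> has_order \<alpha> (- (n^2)) P 5"
  then obtain P where oc: "on_curve \<alpha> (- (n^2)) P" and ho: "has_order \<alpha> (- (n^2)) P 5" by blast
  define A where "A = \<alpha>"
  define B where "B = - (n^2)"
  have S5: "ec_smul A B 5 P = Inf" and Sne: "\<And>j. 0 < j \<Longrightarrow> j < 5 \<Longrightarrow> ec_smul A B j P \<noteq> Inf"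
    using ho unfolding has_order_def A_def B_def by auto
  have sS: "\<And>k. ec_smul A B (Suc k) P = ec_add A B P (ec_smul A B k P)" by simp
  have s1: "ec_smul A B 1 P = P" by (simp add: add_inf)
  have s2: "ec_smul A B 2 P = ec_add A B P P" using sS[of 1] s1 by (simp add: numeral_2_eq_2)
  have s3: "ec_smul A B 3 P = ec_add A B P (ec_smul A B 2 P)" using sS[of 2] by (simp add: numeral_3_eq_3 numeral_2_eq_2)
  have s4: "ec_smul A B 4 P = ec_add A B P (ec_smul A B 3 P)" using sS[of 3] by (simp add: eval_nat_numeral)
  have s5: "ec_smul A B 5 P = ec_add A B P (ec_smul A B 4 P)" using sS[of 4] by (simp add: eval_nat_numeral)
  have n1: "ec_smul A B 1 P \<noteq> Inf" "ec_smul A B 2 P \<noteq> Inf" "ec_smul A B 3 P \<noteq> Inf" "ec_smul A B 4 P \<noteq> Inf"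
    using Sne[of 1] Sne[of 2] Sne[of 3] Sne[of 4] by (auto simp del: ec_smul.simps)
  obtain x y where P: "P = Pt x y" using n1(1) s1 by (cases P) auto
  have cx: "y^2 = x^3 + A*x^2 + B*x" using oc P unfolding on_curve_def A_def B_def by simp
  have y0: "y \<noteq> 0"
  proof
    assume "y = 0"
    hence "ec_add A B P P = Inf" using P add_neg[of x x y y A B] by simp
    thus False using n1(2) s2 by simp
  qed
  define l where "l = (3*x^2 + 2*A*x + B)/(2*y)"
  have hl: "2*l*y = 3*x^2 + 2*A*x + B" unfolding l_def using y0 by simp
  define z where "z = l^2 - A - x - x"
  define y2 where "y2 = - (y + l*(z - x))"
  have S2: "ec_smul A B 2 P = Pt z y2"
    using s2 P add_tan[OF refl _ l_def, of y] y0 unfolding z_def y2_def by simp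
  have cz: "y2^2 = z^3 + A*z^2 + B*z" using tangent_on[OF cx hl z_def y2_def] .
  have zx: "x \<noteq> z"
  proof
    assume "x = z"
    hence "y = - y2" unfolding y2_def by simp
    hence "ec_smul A B 3 P = Inf" using s3 S2 P add_neg[of x z y y2 A B] \<open>x = z\<close> by simp
    thus False using n1(3) by simp
  qed
  define m where "m = (y2 - y)/(z - x)"
  define x3 where "x3 = m^2 - A - x - z"
  define y3 where "y3 = - (y + m*(x3 - x))"
  have S3: "ec_smul A B 3 P = Pt x3 y3"
    using s3 S2 P add_chord[OF zx m_def] unfolding x3_def y3_def by simp
  have c3: "y3^2 = x3^3 + A*x3^2 + B*x3" using chord_on[OF cx cz zx m_def x3_def y3_def] .
  have x3x: "x \<noteq> x3"
  proof
    assume e: "x = x3"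
    show False
    proof (cases "y = - y3")
      case True
      hence "ec_smul A B 4 P = Inf" using s4 S3 P add_neg[of x x3 y y3 A B] e by simp
      thus False using n1(4) by simp
    next
      case False
      have "ec_smul A B 4 P = Pt z y2"
        using s4 S3 P add_tan[OF e False l_def] e unfolding z_def y2_def by simp
      hence "ec_smul A B 5 P = Pt x3 y3" using s5 s3 S2 S3 by simp
      thus False using S5 by simp
    qed
  qed
  define v where "v = (y3 - y)/(x3 - x)"
  define x4 where "x4 = v^2 - A - x - x3"
  define y4 where "y4 = - (y + v*(x4 - x))"
  have S4: "ec_smul A B 4 P = Pt x4 y4"
    using s4 S3 P add_chord[OF x3x v_def] unfolding x4_def y4_def by simp
  have xx4: "x = x4"
  proof (rule ccontr)
    assume "x \<noteq> x4"
    hence "ec_smul A B 5 P \<noteq> Inf" using s5 S4 P add_chord[OF _ refl] by simp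
    thus False using S5 by simp
  qed
  have vv: "v*(x - x3) = y - y3" unfolding v_def using x3x by (simp add: field_simps)
  have v2: "v^2 = A + x3 + 2*x" using xx4 unfolding x4_def by simp
  have "2*v*y = 3*x^2 + 2*A*x + B" using DR[OF c3 cx _ vv v2] x3x by simp
  hence "(v - l) * (2*y) = 0" using hl by (simp add: algebra_simps)
  hence "v = l" using y0 by simp
  hence x3z: "x3 = z" using xx4 unfolding x4_def z_def by simp
  have mm: "m*(z - x) = y2 - y" unfolding m_def using zx by (simp add: field_simps)
  have m2: "m^2 = A + x + 2*z" using x3z unfolding x3_def by simp
  have hm: "2*m*y2 = 3*z^2 + 2*A*z + B" using DR[OF cx cz zx mm m2] .
  have y20: "y2 \<noteq> 0"
  proof
    assume "y2 = 0"
    hence "z^3 + A*z^2 - n^2*z = 0" "3*z^2 + 2*A*z - n^2 = 0" using cz hm unfolding B_def by simp_all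
    thus False using no_double assms by blast
  qed
  have xd: "x = m^2 - A - z - z" using m2 by simp
  have d1: "4*y^2*z = (x^2 + n^2)^2" using doubling[OF cx hl z_def] unfolding B_def by simp
  have d2: "4*y2^2*x = (z^2 + n^2)^2" using doubling[OF cz hm xd] unfolding B_def by simp
  have rel: "x*z*(x+z)^2 = 5*(x*z)^2 + 2*n^2*(x*z) + n^4"
  proof -
    have e1: "y^2 = x^3 + A*x^2 - n^2*x" and e2: "y2^2 = z^3 + A*z^2 - n^2*z" using cx cz unfolding B_def by simp_all
    show ?thesis using relation[OF d1 e1 d2 e2 zx] .
  qed
  define s where "s = (x^2 + n^2)/(2*y)"
  define t where "t = (z^2 + n^2)/(2*y2)"
  have zs: "z = s^2" unfolding s_def using d1 y0 by (simp add: field_simps power2_eq_square)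
  have xt: "x = t^2" unfolding t_def using d2 y20 by (simp add: field_simps power2_eq_square)
  have x0: "x \<noteq> 0" using cx y0 by auto
  have z0: "z \<noteq> 0" using cz y20 by auto
  define p where "p = s*t"
  have pxz: "p^2 = x*z" unfolding p_def using zs xt by (simp add: power_mult_distrib)
  have p0: "p \<noteq> 0" using pxz x0 z0 by auto
  have "(p*(x+z))^2 = 5*p^4 + 2*p^2*n^2 + n^4"
  proof -
    have "(p*(x+z))^2 = x*z*(x+z)^2" using pxz by (simp add: power_mult_distrib)
    also have "\<dots> = 5*(p^2)^2 + 2*n^2*p^2 + n^4" using rel pxz by simp
    finally show ?thesis by (simp add: power_mult[symmetric] algebra_simps)
  qed
  thus False using E1_rat p0 by blast
qed

end
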